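(* Let $G$ be a group with bounded centralizer sequences. Then $[g_1,g_2]=g_1g_2g_1^{-1}g_2^{-1}$ is a weak identity in $G$.
   Context: A group $G$ has bounded centralizer sequences if there is an integer $N$ such that for every chain of subsets $P_1\subset P_2\subset\dots\subset P_N$ of $G$ with each $P_i$ consisting of mutually commuting elements, the chain of centralizers $C_G(P_1)\supseteq C_G(P_2)\supseteq\dots\supseteq C_G(P_N)$ is not strictly decreasing. Let $F$ be the free group on countably many generators $g_1,g_2,\dots$. For $N\ge1$, $F^{\times N}$ is the direct product of $N$ copies of $F$, $i_k:F\to F^{\times N}$ the $k$-th inclusion. An element $f\in F$ is a weak identity in $G$ if there exists $N\ge1$ such that for every homomorphism $\rho:F^{\times N}\to G$ there is $k\in\{1,\dots,N\}$ with $\rho(i_k(f))=1$. *)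

theory Defs
  imports "HOL-Algebra.Product_Groups"
begin

text \<open>Elements are reduced words; a letter (b, n) stands for the generator g_n
  (if b = False) or its inverse (if b = True).\<close>

type_synonym fletter = "bool \<times> nat"

definition cancels :: "fletter \<Rightarrow> fletter \<Rightarrow> bool" where
  "cancels x y \<longleftrightarrow> snd x = snd y \<and> fst x \<noteq> fst y"

fun reduced :: "fletter list \<Rightarrow> bool" where
  "reduced [] = True"
| "reduced [x] = True"
| "reduced (x # y # ws) = (\<not> cancels x y \<and> reduced (y # ws))"

definition push :: "fletter \<Rightarrow> fletter list \<Rightarrow> fletter list" where
  "push x ws = (case ws of [] \<Rightarrow> [x] | y # r \<Rightarrow> (if cancels x y then r else x # ws))"

definition fmult :: "fletter list \<Rightarrow> fletter list \<Rightarrow> fletter list" where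
  "fmult xs ys = foldr push xs ys"

definition free_group :: "fletter list monoid" where
  "free_group = \<lparr>carrier = {ws. reduced ws}, monoid.mult = fmult, one = []\<rparr>"

definition gen :: "nat \<Rightarrow> fletter list" where
  "gen n = [(False, n)]"

definition comm12 :: "fletter list" where
  "comm12 = gen 1 \<otimes>\<^bsub>free_group\<^esub> (gen 2 \<otimes>\<^bsub>free_group\<^esub>
     (inv\<^bsub>free_group\<^esub> (gen 1) \<otimes>\<^bsub>free_group\<^esub> inv\<^bsub>free_group\<^esub> (gen 2)))"

definition free_power :: "nat \<Rightarrow> (nat \<Rightarrow> fletter list) monoid" where
  "free_power N = product_group {1..N} (\<lambda>_. free_group)"

definition incl :: "nat \<Rightarrow> nat \<Rightarrow> fletter list \<Rightarrow> (nat \<Rightarrow> fletter list)" where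
  "incl N k f = (\<lambda>j\<in>{1..N}. if j = k then f else \<one>\<^bsub>free_group\<^esub>)"

definition weak_identity :: "fletter list \<Rightarrow> ('g, 'b) monoid_scheme \<Rightarrow> bool" where
  "weak_identity f G \<longleftrightarrow> (\<exists>N\<ge>1. \<forall>\<rho>\<in>hom (free_power N) G.
      \<exists>k\<in>{1..N}. \<rho> (incl N k f) = \<one>\<^bsub>G\<^esub>)"

definition centralizer_set :: "('g, 'b) monoid_scheme \<Rightarrow> 'g set \<Rightarrow> 'g set" where
  "centralizer_set G P = {x \<in> carrier G. \<forall>p\<in>P. x \<otimes>\<^bsub>G\<^esub> p = p \<otimes>\<^bsub>G\<^esub> x}"

definition bounded_centralizer_sequences :: "('g, 'b) monoid_scheme \<Rightarrow> bool" where
  "bounded_centralizer_sequences G \<longleftrightarrow> (\<exists>N::nat. \<forall>P :: nat \<Rightarrow> 'g set.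
      ((\<forall>i\<in>{1..N}. P i \<subseteq> carrier G \<and>
          (\<forall>x\<in>P i. \<forall>y\<in>P i. x \<otimes>\<^bsub>G\<^esub> y = y \<otimes>\<^bsub>G\<^esub> x))
       \<and> (\<forall>i\<in>{1..<N}. P i \<subseteq> P (Suc i)))
      \<longrightarrow> \<not> (\<forall>i\<in>{1..<N}. centralizer_set G (P (Suc i)) \<subset> centralizer_set G (P i)))"

end

theory Submission
  imports Defs
begin

lemma inv_gen: "inv\<^bsub>free_group\<^esub> (gen n) = [(True, n)]"
  unfolding m_inv_def
proof (rule the_equality)
  show "[(True, n)] \<in> carrier free_group \<and> gen n \<otimes>\<^bsub>free_group\<^esub> [(True, n)] = \<one>\<^bsub>free_group\<^esub> \<and>
        [(True, n)] \<otimes>\<^bsub>free_group\<^esub> gen n = \<one>\<^bsub>free_group\<^esub>"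
    by (simp add: free_group_def gen_def fmult_def push_def cancels_def)
next
  fix y assume "y \<in> carrier free_group \<and> gen n \<otimes>\<^bsub>free_group\<^esub> y = \<one>\<^bsub>free_group\<^esub> \<and>
        y \<otimes>\<^bsub>free_group\<^esub> gen n = \<one>\<^bsub>free_group\<^esub>"
  then have "push (False, n) y = []" by (simp add: free_group_def gen_def fmult_def)
  then show "y = [(True, n)]"
    by (auto simp: push_def cancels_def split: list.splits if_splits)
qed

lemma comm12_eq: "comm12 = [(False,1),(False,2),(True,1),(True,2)]"
  unfolding comm12_def inv_gen by (simp add: free_group_def gen_def fmult_def push_def cancels_def)

lemma fmult_Nil_right: "reduced x \<Longrightarrow> fmult x [] = x"
proof (induction x rule: reduced.induct)
  case 1 then show ?case by (simp add: fmult_def)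
next
  case (2 x) then show ?case by (simp add: fmult_def push_def)
next
  case (3 x y ws) then show ?case by (simp add: fmult_def push_def)
qed

lemma fmult_Nil_left: "fmult [] x = x"
  by (simp add: fmult_def)

lemma incl_carrier:
  assumes "reduced f" shows "incl N k f \<in> carrier (free_power N)"
  using assms by (auto simp: free_power_def incl_def free_group_def)

lemma incl_comm:
  assumes "reduced f" "reduced g" "k \<noteq> j"
  shows "incl N k f \<otimes>\<^bsub>free_power N\<^esub> incl N j g = incl N j g \<otimes>\<^bsub>free_power N\<^esub> incl N k f"
  using assms by (auto simp: free_power_def incl_def free_group_def fmult_Nil_right fmult_Nil_left)

lemma incl_mult:
  shows "incl N k f \<otimes>\<^bsub>free_power N\<^esub> incl N k g = incl N k (fmult f g)"
  by (auto simp: free_power_def incl_def free_group_def fmult_Nil_left)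

lemma key_identity:
  "incl N k comm12 \<otimes>\<^bsub>free_power N\<^esub> (incl N k (gen 2) \<otimes>\<^bsub>free_power N\<^esub> incl N k (gen 1))
    = incl N k (gen 1) \<otimes>\<^bsub>free_power N\<^esub> incl N k (gen 2)"
  by (simp add: incl_mult comm12_eq gen_def fmult_def push_def cancels_def)

lemma gen_reduced: "reduced (gen n)" by (simp add: gen_def)
lemma comm12_reduced: "reduced comm12" by (simp add: comm12_eq cancels_def)

theorem lemma3p3:
  fixes G :: "('g, 'b) monoid_scheme"
  assumes "group G"
    and "bounded_centralizer_sequences G"
  shows "weak_identity comm12 G"
proof -
  interpret group G by fact
  obtain N0 where N0: "\<forall>P :: nat \<Rightarrow> 'g set.
      ((\<forall>i\<in>{1..N0}. P i \<subseteq> carrier G \<and>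
          (\<forall>x\<in>P i. \<forall>y\<in>P i. x \<otimes>\<^bsub>G\<^esub> y = y \<otimes>\<^bsub>G\<^esub> x))
       \<and> (\<forall>i\<in>{1..<N0}. P i \<subseteq> P (Suc i)))
      \<longrightarrow> \<not> (\<forall>i\<in>{1..<N0}. centralizer_set G (P (Suc i)) \<subset> centralizer_set G (P i))"
    using assms(2) unfolding bounded_centralizer_sequences_def by blast
  define N where "N = max 1 N0"
  have "\<forall>\<rho>\<in>hom (free_power N) G. \<exists>k\<in>{1..N}. \<rho> (incl N k comm12) = \<one>\<^bsub>G\<^esub>"
  proof (rule ballI, rule ccontr)
    fix \<rho> assume rho: "\<rho> \<in> hom (free_power N) G"
      and ne: "\<not> (\<exists>k\<in>{1..N}. \<rho> (incl N k comm12) = \<one>\<^bsub>G\<^esub>)"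
    have rc: "\<rho> x \<in> carrier G" if "x \<in> carrier (free_power N)" for x
      using rho that by (auto simp: hom_def)
    have rm: "\<rho> (x \<otimes>\<^bsub>free_power N\<^esub> y) = \<rho> x \<otimes>\<^bsub>G\<^esub> \<rho> y"
      if "x \<in> carrier (free_power N)" "y \<in> carrier (free_power N)" for x y
      using rho that by (auto simp: hom_def)
    define a where "a k = \<rho> (incl N k (gen 1))" for k
    define b where "b k = \<rho> (incl N k (gen 2))" for k
    have ac: "a k \<in> carrier G" for k unfolding a_def by (rule rc, rule incl_carrier, rule gen_reduced)
    have bc: "b k \<in> carrier G" for k unfolding b_def by (rule rc, rule incl_carrier, rule gen_reduced)
    have aa: "a k \<otimes>\<^bsub>G\<^esub> a j = a j \<otimes>\<^bsub>G\<^esub> a k" for k j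
    proof (cases "k = j")
      case False
      then show ?thesis unfolding a_def
        using rm[OF incl_carrier[OF gen_reduced] incl_carrier[OF gen_reduced]]
          incl_comm[OF gen_reduced gen_reduced] by metis
    qed simp
    have ba: "b k \<otimes>\<^bsub>G\<^esub> a j = a j \<otimes>\<^bsub>G\<^esub> b k" if "k \<noteq> j" for k j
      unfolding a_def b_def using that
        rm[OF incl_carrier[OF gen_reduced] incl_carrier[OF gen_reduced]]
          incl_comm[OF gen_reduced gen_reduced] by metis
    have ab: "a k \<otimes>\<^bsub>G\<^esub> b k \<noteq> b k \<otimes>\<^bsub>G\<^esub> a k" if "k \<in> {1..N}" for k
    proof
      assume eq: "a k \<otimes>\<^bsub>G\<^esub> b k = b k \<otimes>\<^bsub>G\<^esub> a k"
      have "\<rho> (incl N k comm12) \<otimes>\<^bsub>G\<^esub> (b k \<otimes>\<^bsub>G\<^esub> a k) = a k \<otimes>\<^bsub>G\<^esub> b k"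
      proof -
        let ?x = "incl N k (gen 2) \<otimes>\<^bsub>free_power N\<^esub> incl N k (gen 1)"
        have xc: "?x \<in> carrier (free_power N)"
          unfolding incl_mult by (rule incl_carrier) (simp add: gen_def fmult_def push_def cancels_def)
        have "\<rho> (incl N k comm12 \<otimes>\<^bsub>free_power N\<^esub> ?x) = \<rho> (incl N k comm12) \<otimes>\<^bsub>G\<^esub> \<rho> ?x"
          by (rule rm[OF incl_carrier[OF comm12_reduced] xc])
        moreover have "\<rho> ?x = b k \<otimes>\<^bsub>G\<^esub> a k" unfolding a_def b_def
          by (rule rm[OF incl_carrier[OF gen_reduced] incl_carrier[OF gen_reduced]])
        moreover have "\<rho> (incl N k (gen 1) \<otimes>\<^bsub>free_power N\<^esub> incl N k (gen 2)) = a k \<otimes>\<^bsub>G\<^esub> b k"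
          unfolding a_def b_def
          by (rule rm[OF incl_carrier[OF gen_reduced] incl_carrier[OF gen_reduced]])
        ultimately show ?thesis using key_identity[of N k] by simp
      qed
      then have "\<rho> (incl N k comm12) \<otimes>\<^bsub>G\<^esub> (b k \<otimes>\<^bsub>G\<^esub> a k) = \<one>\<^bsub>G\<^esub> \<otimes>\<^bsub>G\<^esub> (b k \<otimes>\<^bsub>G\<^esub> a k)"
        using eq ac bc by simp
      then have "\<rho> (incl N k comm12) = \<one>\<^bsub>G\<^esub>"
        using right_cancel[of "b k \<otimes>\<^bsub>G\<^esub> a k" "\<rho> (incl N k comm12)" "\<one>\<^bsub>G\<^esub>"] ac bc rc[OF incl_carrier[OF comm12_reduced]] by simp
      then show False using ne that by blast
    qed
    define P where "P i = a ` {1..i}" for i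
    have h1: "\<forall>i\<in>{1..N0}. P i \<subseteq> carrier G \<and>
          (\<forall>x\<in>P i. \<forall>y\<in>P i. x \<otimes>\<^bsub>G\<^esub> y = y \<otimes>\<^bsub>G\<^esub> x)"
      unfolding P_def using ac aa by auto
    have h2: "\<forall>i\<in>{1..<N0}. P i \<subseteq> P (Suc i)"
      unfolding P_def by auto
    have h3: "\<forall>i\<in>{1..<N0}. centralizer_set G (P (Suc i)) \<subset> centralizer_set G (P i)"
    proof
      fix i assume i: "i \<in> {1..<N0}"
      have sub: "centralizer_set G (P (Suc i)) \<subseteq> centralizer_set G (P i)"
        unfolding centralizer_set_def P_def by auto
      have "b (Suc i) \<in> centralizer_set G (P i)"
        unfolding centralizer_set_def P_def using bc ba by auto
      moreover have "b (Suc i) \<notin> centralizer_set G (P (Suc i))"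
      proof
        assume "b (Suc i) \<in> centralizer_set G (P (Suc i))"
        then have "b (Suc i) \<otimes>\<^bsub>G\<^esub> a (Suc i) = a (Suc i) \<otimes>\<^bsub>G\<^esub> b (Suc i)"
          unfolding centralizer_set_def P_def by auto
        moreover have "Suc i \<in> {1..N}" using i unfolding N_def by auto
        ultimately show False using ab by metis
      qed
      ultimately show "centralizer_set G (P (Suc i)) \<subset> centralizer_set G (P i)"
        using sub by blast
    qed
    show False using N0 h1 h2 h3 by blast
  qed
  moreover have "N \<ge> 1" unfolding N_def by simp
  ultimately show ?thesis unfolding weak_identity_def by blast
qed

end
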